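(* Let $0<\alpha<1$ and $x_A>0$. For a point $(x,y)$ with $x>0$ and $(x,y)\neq(x_A,0)$, consider the Apollonius circle of the Target position $T=(x,y)$ and the Attacker position $A=(x_A,0)$ with ratio $\alpha$, i.e. the circle with center abscissa $x_O=\frac{x-\alpha^2x_A}{1-\alpha^2}$ and radius $r=\frac{\alpha}{1-\alpha^2}\sqrt{(x_A-x)^2+y^2}$. Let $R_e$ be the set of such points $(x,y)$, $x>0$, for which this circle crosses the $y$-axis, i.e. $x_O<r$ (equivalently $x-\alpha^2x_A<\alpha\sqrt{(x_A-x)^2+y^2}$), and let $R_{e_o}$ be the set of remaining points with $x>0$. Then $$R_e=\Big\{(x,y):\ x>0,\ \frac{x^2}{\alpha^2x_A^2}-\frac{y^2}{(1-\alpha^2)x_A^2}<1\Big\},$$ so that the curve separating $R_e$ from $R_{e_o}$ is the right branch ($x>0$) of the hyperbola $$\frac{x^2}{\alpha^2x_A^2}-\frac{y^2}{(1-\alpha^2)x_A^2}=1.$$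
   Context: Setting (reduced state space of the active target defense game): the Attacker starts at $(x_A,0)$ and the Defender at $(-x_A,0)$, $x_A>0$, both with the same constant speed $V_A=V_D$; the Target starts at $(x,y)$ with $x>0$ and has constant speed $V_T$; $\alpha=V_T/V_A\in(0,1)$. The Apollonius circle of $T$ and $A$ with ratio $\alpha$ is the set of points $P$ with $|PT|=\alpha|PA|$. $R_e$ is the escape region: initial Target positions from which the Target can reach the $y$-axis (where the Defender can intercept the Attacker) before the Attacker reaches it, characterized by the Apollonius circle crossing the $y$-axis. *)

theory Defs
  imports Complex_Main
begin

definition apollonius_xO :: "real \<Rightarrow> real \<Rightarrow> real \<Rightarrow> real \<Rightarrow> real" where
  "apollonius_xO \<alpha> xA x y = (x - \<alpha>\<^sup>2 * xA) / (1 - \<alpha>\<^sup>2)"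

definition apollonius_r :: "real \<Rightarrow> real \<Rightarrow> real \<Rightarrow> real \<Rightarrow> real" where
  "apollonius_r \<alpha> xA x y = \<alpha> / (1 - \<alpha>\<^sup>2) * sqrt ((xA - x)\<^sup>2 + y\<^sup>2)"

definition escape_region :: "real \<Rightarrow> real \<Rightarrow> (real \<times> real) set" where
  "escape_region \<alpha> xA = {(x, y). x > 0 \<and> (x, y) \<noteq> (xA, 0) \<and>
      apollonius_xO \<alpha> xA x y < apollonius_r \<alpha> xA x y}"

definition escape_region_complement :: "real \<Rightarrow> real \<Rightarrow> (real \<times> real) set" where
  "escape_region_complement \<alpha> xA = {(x, y). x > 0 \<and> (x, y) \<noteq> (xA, 0) \<and>
      \<not> (apollonius_xO \<alpha> xA x y < apollonius_r \<alpha> xA x y)}"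

end

theory Submission
  imports Defs
begin

lemma key:
  fixes a xA x y :: real
  assumes a: "0 < a" "a < 1" and xA: "0 < xA" and x: "0 < x"
  shows "(x - a\<^sup>2 * xA < a * sqrt ((xA - x)\<^sup>2 + y\<^sup>2)) \<longleftrightarrow>
         x\<^sup>2 * (1 - a\<^sup>2) - a\<^sup>2 * y\<^sup>2 < a\<^sup>2 * xA\<^sup>2 * (1 - a\<^sup>2)"
proof -
  define S where "S = sqrt ((xA - x)\<^sup>2 + y\<^sup>2)"
  have S0: "S \<ge> 0" unfolding S_def by simp
  have S2: "S\<^sup>2 = (xA - x)\<^sup>2 + y\<^sup>2" unfolding S_def by simp
  have aS: "(a*S)\<^sup>2 = a\<^sup>2 * ((xA - x)\<^sup>2 + y\<^sup>2)" using S2 by (simp add: power_mult_distrib)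
  have iden: "a\<^sup>2 * ((xA - x)\<^sup>2 + y\<^sup>2) - (x - a\<^sup>2 * xA)\<^sup>2
      = a\<^sup>2 * xA\<^sup>2 * (1 - a\<^sup>2) - (x\<^sup>2 * (1 - a\<^sup>2) - a\<^sup>2 * y\<^sup>2)"
    by (simp add: power2_eq_square algebra_simps)
  show ?thesis
  proof (cases "x - a\<^sup>2 * xA < 0")
    case True
    have "a\<^sup>2 * xA < xA" using a xA by (simp add: power_less_one_iff)
    have h: "x\<^sup>2 < (a\<^sup>2*xA)\<^sup>2" using True x by (intro power_strict_mono) auto
    have "(a\<^sup>2*xA)\<^sup>2 = a\<^sup>2 * xA\<^sup>2 * a\<^sup>2" by (simp add: power2_eq_square)
    have "x\<^sup>2 * (1 - a\<^sup>2) < a\<^sup>2 * xA\<^sup>2 * (1 - a\<^sup>2)"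
    proof -
      have "(a\<^sup>2)\<^sup>2 \<le> a\<^sup>2" using a by (simp add: power_le_one)
      hence "(a\<^sup>2*xA)\<^sup>2 \<le> a\<^sup>2 * xA\<^sup>2"
        by (simp add: power_mult_distrib mult_right_mono)
      with h have "x\<^sup>2 < a\<^sup>2 * xA\<^sup>2" by linarith
      moreover have "1 - a\<^sup>2 > 0" using a by (simp add: power_less_one_iff)
      ultimately show ?thesis by simp
    qed
    moreover have "a\<^sup>2 * y\<^sup>2 \<ge> 0" by simp
    moreover have "a * S \<ge> 0" using a S0 by simp
    ultimately have "x - a\<^sup>2 * xA < a * S" "x\<^sup>2 * (1 - a\<^sup>2) - a\<^sup>2 * y\<^sup>2 < a\<^sup>2 * xA\<^sup>2 * (1 - a\<^sup>2)"
      using True by linarith+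
    thus ?thesis unfolding S_def by simp
  next
    case False
    have "(x - a\<^sup>2 * xA < a * S) \<longleftrightarrow> (x - a\<^sup>2 * xA)\<^sup>2 < (a*S)\<^sup>2"
    proof -
      have u: "0 \<le> x - a\<^sup>2 * xA" using False by linarith
      have v: "0 \<le> a * S" using a S0 by simp
      show ?thesis
      proof
        assume "x - a\<^sup>2 * xA < a * S" thus "(x - a\<^sup>2 * xA)\<^sup>2 < (a*S)\<^sup>2"
          using u by (rule power_strict_mono) auto
      next
        assume "(x - a\<^sup>2 * xA)\<^sup>2 < (a*S)\<^sup>2" thus "x - a\<^sup>2 * xA < a * S"
          using v by (rule power_less_imp_less_base)
      qed
    qed
    also have "\<dots> \<longleftrightarrow> x\<^sup>2 * (1 - a\<^sup>2) - a\<^sup>2 * y\<^sup>2 < a\<^sup>2 * xA\<^sup>2 * (1 - a\<^sup>2)"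
      using aS iden by linarith
    finally show ?thesis using S_def by simp
  qed
qed

theorem proposition4:
  fixes \<alpha> xA :: real
  assumes "0 < \<alpha>" and "\<alpha> < 1" and "0 < xA"
  shows "escape_region \<alpha> xA =
           {(x, y). x > 0 \<and> (x, y) \<noteq> (xA, 0) \<and>
              x\<^sup>2 / (\<alpha>\<^sup>2 * xA\<^sup>2) - y\<^sup>2 / ((1 - \<alpha>\<^sup>2) * xA\<^sup>2) < 1}"
proof -
  have d: "1 - \<alpha>\<^sup>2 > 0" using assms by (simp add: power_less_one_iff)
  have p: "\<alpha>\<^sup>2 * xA\<^sup>2 > 0" using assms by simp
  have p2: "(1 - \<alpha>\<^sup>2) * xA\<^sup>2 > 0" using d assms by simp
  have c1: "apollonius_xO \<alpha> xA x y < apollonius_r \<alpha> xA x y \<longleftrightarrow>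
      x - \<alpha>\<^sup>2 * xA < \<alpha> * sqrt ((xA - x)\<^sup>2 + y\<^sup>2)" for x y
    unfolding apollonius_xO_def apollonius_r_def using d
    by (simp add: divide_less_eq less_divide_eq mult.commute)
  have c2: "x\<^sup>2 / (\<alpha>\<^sup>2 * xA\<^sup>2) - y\<^sup>2 / ((1 - \<alpha>\<^sup>2) * xA\<^sup>2) < 1 \<longleftrightarrow>
      x\<^sup>2 * (1 - \<alpha>\<^sup>2) - \<alpha>\<^sup>2 * y\<^sup>2 < \<alpha>\<^sup>2 * xA\<^sup>2 * (1 - \<alpha>\<^sup>2)" for x y
  proof -
    have "x\<^sup>2 / (\<alpha>\<^sup>2 * xA\<^sup>2) - y\<^sup>2 / ((1 - \<alpha>\<^sup>2) * xA\<^sup>2)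
       = (x\<^sup>2 * (1 - \<alpha>\<^sup>2) - \<alpha>\<^sup>2 * y\<^sup>2) / (\<alpha>\<^sup>2 * xA\<^sup>2 * (1 - \<alpha>\<^sup>2))"
    proof -
      have e1: "x\<^sup>2 / (\<alpha>\<^sup>2 * xA\<^sup>2) = x\<^sup>2 * (1 - \<alpha>\<^sup>2) / (\<alpha>\<^sup>2 * xA\<^sup>2 * (1 - \<alpha>\<^sup>2))"
        using d by (metis mult_divide_mult_cancel_right less_irrefl)
      have e2: "y\<^sup>2 / ((1 - \<alpha>\<^sup>2) * xA\<^sup>2) = \<alpha>\<^sup>2 * y\<^sup>2 / (\<alpha>\<^sup>2 * xA\<^sup>2 * (1 - \<alpha>\<^sup>2))"
      proof -
        have "\<alpha>\<^sup>2 \<noteq> 0" using assms by simp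
        hence "y\<^sup>2 / ((1 - \<alpha>\<^sup>2) * xA\<^sup>2) = (\<alpha>\<^sup>2 * y\<^sup>2) / (\<alpha>\<^sup>2 * ((1 - \<alpha>\<^sup>2) * xA\<^sup>2))"
          by (metis mult_divide_mult_cancel_left)
        thus ?thesis by (simp only: mult.assoc mult.commute[of "1 - \<alpha>\<^sup>2"])
      qed
      show ?thesis unfolding e1 e2 by (simp add: diff_divide_distrib)
    qed
    also have "\<dots> < 1 \<longleftrightarrow> x\<^sup>2 * (1 - \<alpha>\<^sup>2) - \<alpha>\<^sup>2 * y\<^sup>2 < \<alpha>\<^sup>2 * xA\<^sup>2 * (1 - \<alpha>\<^sup>2)"
      using p d by (simp add: divide_less_eq)
    finally show ?thesis .
  qed
  show ?thesis
    unfolding escape_region_def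
    using key[OF assms(1,2,3)] c1 c2 by auto
qed

end
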